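(* For $n\ge1$ and $0\le i\le\lfloor (n-1)/2\rfloor$, $b(n+1,i+1,n)=P(n,i)$, where $P(n,i)$ is the number of permutations $\pi\in\mathfrak{S}_n$ with exactly $i$ interior peaks.
   Context: An interior peak of $\pi\in\mathfrak{S}_n$ is an index $m\in\{2,\dots,n-1\}$ with $\pi(m-1)<\pi(m)>\pi(m+1)$. The integers $b(n,i,j)$ ($n\ge1$) are defined by $b(1,0,0)=1$, $b(1,i,j)=0$ for $(i,j)\ne(0,0)$, $b(n,i,j)=0$ if $i<0$ or $j<0$, and $b(n+1,i,j)=b(n,i,j)+2i\,b(n,i,j-1)+(n-2i+2)\,b(n,i-1,j-1)$. *)

theory Defs
  imports "HOL-Combinatorics.Permutations"
begin

text \<open>The integers b(n,i,j) for n >= 1; the value at n = 0 is an unused dummy (0).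
  Indices i, j range over the integers; b vanishes for negative i or j.\<close>
fun b :: "nat \<Rightarrow> int \<Rightarrow> int \<Rightarrow> int" where
  "b 0 i j = 0"
| "b (Suc 0) i j = (if i = 0 \<and> j = 0 then 1 else 0)"
| "b (Suc (Suc n)) i j =
     (if i < 0 \<or> j < 0 then 0
      else b (Suc n) i j + 2 * i * b (Suc n) i (j - 1)
           + (int (Suc n) - 2 * i + 2) * b (Suc n) (i - 1) (j - 1))"

definition interior_peaks :: "nat \<Rightarrow> (nat \<Rightarrow> nat) \<Rightarrow> nat set" where
  "interior_peaks n \<pi> = {m \<in> {2..n-1}. \<pi> (m-1) < \<pi> m \<and> \<pi> m > \<pi> (m+1)}"

definition P :: "nat \<Rightarrow> nat \<Rightarrow> nat" where
  "P n i = card {\<pi>. \<pi> permutes {1..n} \<and> card (interior_peaks n \<pi>) = i}"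

end

theory Submission
  imports Defs
begin


lemma b_neg: "i < 0 \<or> j < 0 \<Longrightarrow> b m i j = 0"
  by (cases "(m,i,j)" rule: b.cases) auto

lemma b_big: "m \<ge> 1 \<Longrightarrow> j \<ge> int m \<Longrightarrow> b m i j = 0"
proof (induction m i j rule: b.induct)
  case (3 n i j)
  then show ?case by (cases "n = 0") auto
qed auto

lemma b_i0: "m \<ge> 1 \<Longrightarrow> b m 0 j = (if j = 0 then 1 else 0)"
proof (induction m "0::int" j rule: b.induct)
  case (3 n j)
  then show ?case by (cases "n = 0") (auto simp: b_neg)
qed auto

lemma b_rec: "n \<ge> 2 \<Longrightarrow> i \<ge> 0 \<Longrightarrow>
  b (n+1) (i+1) (int n) = 2*(i+1) * b n (i+1) (int n - 1) + (int n - 2*i) * b n i (int n - 1)"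
proof -
  assume "n \<ge> 2" "i \<ge> 0"
  then obtain k where k: "n = Suc (Suc k)" by (metis add_2_eq_Suc le_Suc_ex)
  have "b (n+1) (i+1) (int n) = b n (i+1) (int n) + 2*(i+1) * b n (i+1) (int n - 1) + (int n - 2*i) * b n i (int n - 1)"
    using \<open>i \<ge> 0\<close> unfolding k by (simp add: algebra_simps)
  moreover have "b n (i+1) (int n) = 0" using k by (intro b_big) auto
  ultimately show ?thesis by simp
qed


definition ins :: "nat \<Rightarrow> (nat \<Rightarrow> nat) \<Rightarrow> nat \<Rightarrow> nat \<Rightarrow> nat" where
  "ins N s p m = (if m < p then s m else if m = p then Suc N else if m \<le> Suc N then s (m - 1) else m)"

lemma perm_le: "s permutes {1..N} \<Longrightarrow> (x::nat) \<le> N \<Longrightarrow> s x \<le> N"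
  by (cases "x = 0") (auto simp: permutes_not_in dest: permutes_in_image[THEN iffD2, of s _ x])

lemma perm_ge1: "s permutes {1..N} \<Longrightarrow> 1 \<le> x \<Longrightarrow> x \<le> N \<Longrightarrow> 1 \<le> s x"
  using permutes_in_image[of s "{1..N}" x] by auto

lemma perm_facts:
  assumes "s permutes {1..N}"
  shows "x \<le> N \<Longrightarrow> s x \<noteq> Suc N" "x \<le> N \<Longrightarrow> Suc N \<noteq> s x" "x \<le> N \<Longrightarrow> s x \<le> Suc N"
    "x \<le> N \<Longrightarrow> s x < Suc N" "x \<le> N \<Longrightarrow> s x \<le> N" "x \<le> N \<Longrightarrow> \<not> Suc N \<le> s x"
  using perm_le[OF assms, of x] by auto

lemma ins_eq_top:
  assumes s: "s permutes {1..N}" and p: "1 \<le> p" "p \<le> Suc N" and m: "m \<le> Suc N"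
  shows "ins N s p m = Suc N \<longleftrightarrow> m = p"
proof (cases "m < p")
  case True then show ?thesis using perm_facts(1)[OF s, of m] p by (simp add: ins_def)
next
  case False then show ?thesis using perm_facts(1)[OF s, of "m-1"] p m by (simp add: ins_def)
qed

lemma ins_inj_on:
  assumes s: "s permutes {1..N}" and p: "1 \<le> p" "p \<le> Suc N"
  shows "inj_on (ins N s p) {1..Suc N}"
proof (rule inj_onI)
  fix x y assume x: "x \<in> {1..Suc N}" and y: "y \<in> {1..Suc N}" and e: "ins N s p x = ins N s p y"
  have inj: "\<And>a c. s a = s c \<Longrightarrow> a = c" using permutes_inj[OF s] by (simp add: inj_eq)
  have le: "\<And>a. a \<le> N \<Longrightarrow> s a \<le> N" using perm_le[OF s] by blast
  show "x = y"
  proof (cases "x = p \<or> y = p")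
    case True
    have t: "ins N s p p = Suc N" by (simp add: ins_def)
    have xr: "x \<le> Suc N" and yr: "y \<le> Suc N" using x y by auto
    show ?thesis
    proof (cases "x = p")
      case True
      then have "ins N s p y = Suc N" using e t by simp
      then show ?thesis using ins_eq_top[OF s p yr] True by simp
    next
      case False
      then have "y = p" using \<open>x = p \<or> y = p\<close> by simp
      then have "ins N s p x = Suc N" using e t by simp
      then show ?thesis using ins_eq_top[OF s p xr] \<open>y = p\<close> by simp
    qed
  next
    case False
    have x1: "ins N s p x = s (if x < p then x else x - 1)" using False x by (simp add: ins_def)
    have y1: "ins N s p y = s (if y < p then y else y - 1)" using False y by (simp add: ins_def)
    have "s (if x < p then x else x - 1) = s (if y < p then y else y - 1)"
      unfolding x1[symmetric] y1[symmetric] by (rule e)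
    then have "(if x < p then x else x - 1) = (if y < p then y else y - 1)"
      by (rule inj)
    then show ?thesis using False x y by (simp split: if_splits)
  qed
qed

lemma ins_permutes:
  assumes s: "s permutes {1..N}" and p: "1 \<le> p" "p \<le> Suc N"
  shows "ins N s p permutes {1..Suc N}"
proof (rule bij_imp_permutes)
  have le: "\<And>a. a \<le> N \<Longrightarrow> s a \<le> N" using perm_le[OF s] by blast
  have ge: "\<And>a. 1 \<le> a \<Longrightarrow> a \<le> N \<Longrightarrow> 1 \<le> s a" using perm_ge1[OF s] by blast
  have sub: "ins N s p ` {1..Suc N} \<subseteq> {1..Suc N}"
  proof
    fix y assume "y \<in> ins N s p ` {1..Suc N}"
    then obtain x where x: "x \<in> {1..Suc N}" "y = ins N s p x" by auto
    show "y \<in> {1..Suc N}" using x p ge[of x] ge[of "x-1"]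
      by (auto simp: ins_def perm_facts[OF s])
  qed
  show "bij_betw (ins N s p) {1..Suc N} {1..Suc N}"
    unfolding bij_betw_def using ins_inj_on[OF s p] endo_inj_surj[OF _ sub] by auto
  show "ins N s p x = x" if "x \<notin> {1..Suc N}" for x
    using that p permutes_not_in[OF s, of x] by (auto simp: ins_def)
qed

lemma ins_pair_inj:
  "inj_on (\<lambda>(s,p). ins N s p) ({s. s permutes {1..N}} \<times> {1..Suc N})"
proof (rule inj_onI, clarify)
  fix s p s' p'
  assume s: "s permutes {1..N}" and s': "s' permutes {1..N}"
    and p: "p \<in> {1..Suc N}" and p': "p' \<in> {1..Suc N}" and e: "ins N s p = ins N s' p'"
  have le: "\<And>a. a \<le> N \<Longrightarrow> s' a \<le> N" using perm_le[OF s'] by blast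
  have "ins N s p p = Suc N" by (simp add: ins_def)
  then have "ins N s' p' p = Suc N" using e by simp
  then have pp: "p = p'" using p p' ins_eq_top[OF s', of p' p] by auto
  have "s m = s' m" for m
  proof -
    consider "m < p" | "p \<le> m" "m \<le> N" | "N < m" by linarith
    then show ?thesis
    proof cases
      case 1 then show ?thesis using fun_cong[OF e, of m] pp by (simp add: ins_def)
    next
      case 2 then show ?thesis using fun_cong[OF e, of "Suc m"] pp by (simp add: ins_def)
    next
      case 3 then show ?thesis using permutes_not_in[OF s, of m] permutes_not_in[OF s', of m] by auto
    qed
  qed
  then show "s = s' \<and> p = p'" using pp by auto
qed

lemma ins_image:
  "(\<lambda>(s,p). ins N s p) ` ({s. s permutes {1..N}} \<times> {1..Suc N}) = {s. s permutes {1..Suc N}}"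
proof (rule card_subset_eq)
  show "finite {s. s permutes {1..Suc N}}" by (simp add: finite_permutations)
  show "(\<lambda>(s,p). ins N s p) ` ({s. s permutes {1..N}} \<times> {1..Suc N}) \<subseteq> {s. s permutes {1..Suc N}}"
    using ins_permutes by auto
  have "card ((\<lambda>(s,p). ins N s p) ` ({s. s permutes {1..N}} \<times> {1..Suc N}))
      = card ({s. s permutes {1..N}} \<times> {1..Suc N})"
    by (rule card_image[OF ins_pair_inj])
  also have "\<dots> = fact N * Suc N" by (simp add: card_cartesian_product card_permutations)
  also have "\<dots> = card {s. s permutes {1..Suc N}}" by (simp add: card_permutations)
  finally show "card ((\<lambda>(s,p). ins N s p) ` ({s. s permutes {1..N}} \<times> {1..Suc N})) = card {s. s permutes {1..Suc N}}" .
qed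


lemma peaks_sub: "interior_peaks N s \<subseteq> {2..N-1}"
  by (auto simp: interior_peaks_def)

lemma peaks_nonadj: "m \<in> interior_peaks N s \<Longrightarrow> Suc m \<notin> interior_peaks N s"
  by (auto simp: interior_peaks_def)

lemma peaks_fin: "finite (interior_peaks N s)"
  by (rule finite_subset[OF peaks_sub]) auto

lemma mem_peaks_ins:
  assumes s: "s permutes {1..N}" and p: "1 \<le> p" "p \<le> Suc N"
  shows "x \<in> interior_peaks (Suc N) (ins N s p) \<longleftrightarrow>
    (x = p \<and> 2 \<le> p \<and> p \<le> N) \<or> (Suc x < p \<and> x \<in> interior_peaks N s)
    \<or> (Suc p < x \<and> x - 1 \<in> interior_peaks N s)"
proof -
  consider "x = p" | "Suc x = p" | "x = Suc p" | "Suc x < p" | "Suc p < x" by linarith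
  then show ?thesis
  proof cases
    case 1
    then show ?thesis using p perm_facts[OF s, of "p-1"] perm_facts[OF s, of p]
      by (auto simp: interior_peaks_def ins_def)
  next
    case 2
    then show ?thesis using p perm_facts[OF s, of "p-1"]
      by (auto simp: interior_peaks_def ins_def)
  next
    case 3
    then show ?thesis using p perm_facts[OF s, of "p"]
      by (auto simp: interior_peaks_def ins_def)
  next
    case 4
    then show ?thesis using p
      by (auto simp: interior_peaks_def ins_def)
  next
    case 5
    then have "x - 1 - 1 = x - 2" "x - 1 + 1 = x" by auto
    then show ?thesis using p 5
      by (auto simp: interior_peaks_def ins_def intro: diff_le_mono)
  qed
qed


lemma card_peaks_ins:
  assumes s: "s permutes {1..N}" and p: "1 \<le> p" "p \<le> Suc N"
  defines "K \<equiv> interior_peaks N s"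
  shows "card (interior_peaks (Suc N) (ins N s p)) =
    (if p \<in> K \<union> Suc ` K \<or> \<not> (2 \<le> p \<and> p \<le> N) then card K else Suc (card K))"
proof -
  define T where "T = (if 2 \<le> p \<and> p \<le> N then {p} else {})"
  define A where "A = {x\<in>K. Suc x < p}"
  define B where "B = {x\<in>K. p < x}"
  have fK: "finite K" unfolding K_def by (rule peaks_fin)
  have fA: "finite A" "finite B" "finite T" using fK unfolding A_def B_def T_def by auto
  have eq: "interior_peaks (Suc N) (ins N s p) = T \<union> A \<union> Suc ` B"
  proof (rule set_eqI)
    fix x
    show "x \<in> interior_peaks (Suc N) (ins N s p) \<longleftrightarrow> x \<in> T \<union> A \<union> Suc ` B"
      unfolding mem_peaks_ins[OF s p] T_def A_def B_def K_def
      by (cases x) (auto simp: image_iff)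
  qed
  have c1: "card (interior_peaks (Suc N) (ins N s p)) = card T + card A + card B"
    unfolding eq using fA
    by (subst card_Un_disjoint, auto simp: T_def A_def B_def card_image card_Un_disjoint)+
  have Ksplit: "K = A \<union> B \<union> (K \<inter> {p-1, p})"
    unfolding A_def B_def by auto
  have c2: "card K = card A + card B + card (K \<inter> {p-1, p})"
    apply (subst Ksplit)
    using fA fK by (subst card_Un_disjoint, auto simp: A_def B_def)+
  have c3: "card (K \<inter> {p-1, p}) = (if p \<in> K \<union> Suc ` K then 1 else 0)"
  proof -
    have "K \<inter> {p-1, p} = (if p \<in> K then {p} else if p - 1 \<in> K then {p-1} else {})"
      using peaks_nonadj[of "p-1" N s] p unfolding K_def by auto
    moreover have "p \<in> Suc ` K \<longleftrightarrow> p - 1 \<in> K" using p by (cases p) auto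
    ultimately show ?thesis by auto
  qed
  have r: "p \<in> K \<union> Suc ` K \<Longrightarrow> 2 \<le> p \<and> p \<le> N"
    unfolding K_def interior_peaks_def by auto
  show ?thesis
    using c1 c2 c3 r by (auto simp: T_def)
qed


lemma fiber_card:
  assumes s: "s permutes {1..N}" and N: "N \<ge> 1"
  shows "int (card {p\<in>{1..Suc N}. card (interior_peaks (Suc N) (ins N s p)) = i}) =
    (if i = card (interior_peaks N s) then 2 * int i + 2
     else if i = Suc (card (interior_peaks N s)) then int N + 1 - 2 * int i else 0)"
proof -
  define K where "K = interior_peaks N s"
  define k where "k = card K"
  define X where "X = K \<union> Suc ` K"
  have fK: "finite K" unfolding K_def by (rule peaks_fin)
  have XN: "X \<subseteq> {2..N}" unfolding X_def K_def interior_peaks_def by auto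
  have cX: "card X = 2 * k"
  proof -
    have "K \<inter> Suc ` K = {}" using peaks_nonadj[of _ N s] unfolding K_def by auto
    then have "card X = card K + card (Suc ` K)" unfolding X_def using fK by (simp add: card_Un_disjoint)
    then show ?thesis unfolding k_def by (simp add: card_image)
  qed
  have fX: "finite X" using XN finite_subset by blast
  have cp: "p \<in> {1..Suc N} \<Longrightarrow> card (interior_peaks (Suc N) (ins N s p)) =
      (if p \<in> X \<or> \<not> (2 \<le> p \<and> p \<le> N) then k else Suc k)" for p
    using card_peaks_ins[OF s, of p] unfolding X_def k_def K_def by auto
  have le: "2 * k \<le> N - 1" using card_mono[OF _ XN] cX by simp
  show ?thesis
  proof (cases "i = k")
    case True
    have "{p\<in>{1..Suc N}. card (interior_peaks (Suc N) (ins N s p)) = i} = {1, Suc N} \<union> X"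
    proof (rule set_eqI)
      fix p show "p \<in> {p\<in>{1..Suc N}. card (interior_peaks (Suc N) (ins N s p)) = i} \<longleftrightarrow> p \<in> {1, Suc N} \<union> X"
      proof (cases "p \<in> {1..Suc N}")
        case True then show ?thesis using cp[OF True] XN \<open>i = k\<close> by auto
      next
        case False then show ?thesis using XN by auto
      qed
    qed
    moreover have "card ({1, Suc N} \<union> X) = 2 + 2 * k"
      using XN fX N cX by (subst card_Un_disjoint) auto
    ultimately show ?thesis using True unfolding k_def K_def by simp
  next
    case False
    note F = False
    show ?thesis
    proof (cases "i = Suc k")
      case True
      have "{p\<in>{1..Suc N}. card (interior_peaks (Suc N) (ins N s p)) = i} = {2..N} - X"
      proof (rule set_eqI)
        fix p show "p \<in> {p\<in>{1..Suc N}. card (interior_peaks (Suc N) (ins N s p)) = i} \<longleftrightarrow> p \<in> {2..N} - X"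
        proof (cases "p \<in> {1..Suc N}")
          case T: True then show ?thesis using cp[OF T] XN \<open>i = Suc k\<close> by auto
        next
          case False then show ?thesis using XN by auto
        qed
      qed
      moreover have "card ({2..N} - X) = (N - 1) - 2 * k"
        using XN fX cX by (simp add: card_Diff_subset)
      ultimately show ?thesis using True F le N unfolding k_def K_def by (auto simp: of_nat_diff)
    next
      case False
      have "{p\<in>{1..Suc N}. card (interior_peaks (Suc N) (ins N s p)) = i} = {}"
        using cp F False by force
      then show ?thesis using F False unfolding k_def K_def by auto
    qed
  qed
qed

lemma sum_if_const:
  "finite A \<Longrightarrow> (\<Sum>x\<in>A. if Q x then (c::int) else 0) = c * int (card {x\<in>A. Q x})"
  by (simp add: sum.inter_filter[symmetric])

lemma P_rec:
  assumes N: "N \<ge> 1"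
  shows "int (P (Suc N) i) = (2 * int i + 2) * int (P N i) +
    (int N + 1 - 2 * int i) * int (card {s. s permutes {1..N} \<and> Suc (card (interior_peaks N s)) = i})"
proof -
  define F where "F = (\<lambda>(s,p). ins N s p)"
  define A where "A = {s. s permutes {1..N}} \<times> {1..Suc N}"
  define Q where "Q = (\<lambda>\<pi>. card (interior_peaks (Suc N) \<pi>) = i)"
  define S where "S = {s. s permutes {1..N}}"
  have fS: "finite S" unfolding S_def by (simp add: finite_permutations)
  have img: "F ` A = {s. s permutes {1..Suc N}}" unfolding F_def A_def by (rule ins_image)
  have inj: "inj_on F A" unfolding F_def A_def by (rule ins_pair_inj)
  have "{\<pi>. \<pi> permutes {1..Suc N} \<and> Q \<pi>} = F ` {x\<in>A. Q (F x)}"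
    using img by auto
  then have "P (Suc N) i = card (F ` {x\<in>A. Q (F x)})"
    unfolding P_def Q_def by simp
  also have "\<dots> = card {x\<in>A. Q (F x)}"
    by (rule card_image) (rule inj_on_subset[OF inj], auto)
  also have "{x\<in>A. Q (F x)} = (SIGMA s:S. {p\<in>{1..Suc N}. Q (ins N s p)})"
    unfolding A_def S_def F_def by auto
  also have "card \<dots> = (\<Sum>s\<in>S. card {p\<in>{1..Suc N}. Q (ins N s p)})"
    using fS by (simp add: card_SigmaI)
  finally have "int (P (Suc N) i) = (\<Sum>s\<in>S. int (card {p\<in>{1..Suc N}. Q (ins N s p)}))"
    by simp
  also have "\<dots> = (\<Sum>s\<in>S. (if card (interior_peaks N s) = i then 2 * int i + 2 else 0)
     + (if Suc (card (interior_peaks N s)) = i then int N + 1 - 2 * int i else 0))"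
  proof (rule sum.cong)
    fix s assume "s \<in> S"
    then have "int (card {p\<in>{1..Suc N}. Q (ins N s p)}) = (if i = card (interior_peaks N s) then 2 * int i + 2
     else if i = Suc (card (interior_peaks N s)) then int N + 1 - 2 * int i else 0)"
      unfolding Q_def S_def by (intro fiber_card[OF _ N]) simp
    then show "int (card {p\<in>{1..Suc N}. Q (ins N s p)}) = (if card (interior_peaks N s) = i then 2 * int i + 2 else 0)
     + (if Suc (card (interior_peaks N s)) = i then int N + 1 - 2 * int i else 0)"
      by auto
  qed simp
  also have "\<dots> = (2 * int i + 2) * int (card {s\<in>S. card (interior_peaks N s) = i})
     + (int N + 1 - 2 * int i) * int (card {s\<in>S. Suc (card (interior_peaks N s)) = i})"
    using fS by (simp add: sum.distrib sum_if_const)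
  finally show ?thesis unfolding S_def P_def by simp
qed


lemma P_one: "P 1 i = (if i = 0 then 1 else 0)"
proof -
  have "{\<pi>. \<pi> permutes {1..1::nat} \<and> card (interior_peaks 1 \<pi>) = i} = (if i = 0 then {id} else {})"
    by (auto simp: interior_peaks_def)
  then show ?thesis unfolding P_def by simp
qed

lemma main: "n \<ge> 1 \<Longrightarrow> b (n+1) (int i + 1) (int n) = int (P n i)"
proof (induction n arbitrary: i)
  case 0 then show ?case by simp
next
  case (Suc N)
  show ?case
  proof (cases "N = 0")
    case True
    then show ?thesis using P_one[of i] by (simp add: numeral_2_eq_2)
  next
    case False
    then have N: "N \<ge> 1" by simp
    have IH: "\<And>j. b (N+1) (int j + 1) (int N) = int (P N j)" using Suc.IH N by blast
    have "b (Suc N + 1) (int i + 1) (int (Suc N)) =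
      2 * (int i + 1) * b (Suc N) (int i + 1) (int (Suc N) - 1) + (int (Suc N) - 2 * int i) * b (Suc N) (int i) (int (Suc N) - 1)"
      using N by (intro b_rec) auto
    also have "\<dots> = 2 * (int i + 1) * int (P N i) + (int N + 1 - 2 * int i) * b (Suc N) (int i) (int N)"
      using IH[of i] by simp
    also have "b (Suc N) (int i) (int N) = int (card {s. s permutes {1..N} \<and> Suc (card (interior_peaks N s)) = i})"
    proof (cases i)
      case 0
      then show ?thesis using b_i0[of "Suc N" "int N"] N by simp
    next
      case (Suc j)
      then show ?thesis using IH[of j] unfolding P_def by (simp add: add.commute)
    qed
    also have "2 * (int i + 1) * int (P N i) + (int N + 1 - 2 * int i) * int (card {s. s permutes {1..N} \<and> Suc (card (interior_peaks N s)) = i})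
       = int (P (Suc N) i)"
      using P_rec[OF N, of i] by (simp add: algebra_simps)
    finally show ?thesis .
  qed
qed

theorem corollary7:
  fixes n i :: nat
  assumes "n \<ge> 1" and "i \<le> (n - 1) div 2"
  shows "b (n + 1) (int i + 1) (int n) = int (P n i)"
  using main[OF assms(1)] .

end
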